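(* Let $\theta>1$, $r\in(\theta^{-1},\theta^{-1/2}]$ and $s=\max\big(1,\frac{\ln\theta}{\ln(r\theta)}-2\big)$. Suppose the random price sequence has maximum $P^*=p^*$ almost surely for a fixed $p^*\in[1,\theta]$, and let $Y$ be a random prediction with values in $[1,\theta]$. Then \[ \frac{\mathbb{E}[\mathsf{A}^1_r(P,Y)]}{\mathbb{E}[P^*]}\ \ge\ \frac{1}{r\theta}\,\Lambda(p^* ),\qquad \Lambda(p^* ):=\mathbb{E}\big[\mathcal{E}(p^*,Y)^{s}\big]. \]
   Context: One-max search: fix $\theta>1$. Prices $p_1,\dots,p_n\in[1,\theta]$ are revealed one at a time; the algorithm receives at the start a prediction $y\in[1,\theta]$ of the maximum price. At each step it irrevocably accepts the current price (payoff = that price) or rejects it; if nothing is accepted the payoff is $1$. Let $\varphi_r(z)=\frac{r\theta-1}{1-r}+\frac{1-r^2\theta}{1-r}\cdot\frac{z}{r\theta}$ and $\Phi^1_r(z)=\max(r\theta,\varphi_r(z))$; $\mathsf{A}^1_r$ accepts the first price $p_i\ge\Phi^1_r(y)$, and $\mathsf{A}^1_r(P,Y)$ is its payoff on the realized (random) prices and prediction. $\mathcal{E}(a,b)=\min\{a/b,b/a\}$. *)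

theory Defs
  imports "HOL-Probability.Probability"
begin

definition phi_r :: "real \<Rightarrow> real \<Rightarrow> real \<Rightarrow> real" where
  "phi_r \<theta> r z = (r*\<theta> - 1)/(1 - r) + (1 - r^2*\<theta>)/(1 - r) * (z/(r*\<theta>))"

definition Phi1 :: "real \<Rightarrow> real \<Rightarrow> real \<Rightarrow> real" where
  "Phi1 \<theta> r z = max (r*\<theta>) (phi_r \<theta> r z)"

definition A1 :: "real \<Rightarrow> real \<Rightarrow> real \<Rightarrow> real list \<Rightarrow> real" where
  "A1 \<theta> r y ps = (case find (\<lambda>p. Phi1 \<theta> r y \<le> p) ps of None \<Rightarrow> 1 | Some p \<Rightarrow> p)"

definition Eff :: "real \<Rightarrow> real \<Rightarrow> real" where
  "Eff a b = min (a/b) (b/a)"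

end

theory Submission
  imports Defs
begin
lemma key:
  fixes \<alpha> \<beta> a \<theta> y s :: real
  assumes "0 < \<alpha>" "0 < \<beta>" "\<alpha> + \<beta>*a = a" "\<alpha> + \<beta>*\<theta> = \<theta>/a" "1 < a" "a < \<theta>"
    "a \<le> y" "y \<le> \<theta>" "ln \<theta> \<le> (2+s) * ln a" "0 \<le> s"
  shows "(\<alpha>+\<beta>*y) powr (1+s) \<le> a * y powr s"
proof -
  define u where "u = ln a"
  define v where "v = ln \<theta>"
  define t where "t = ln y"
  define lam where "lam = (t-u)/(v-u)"
  have y0: "y > 0" using assms by linarith
  have uv: "u < v" using assms unfolding u_def v_def by simp
  have ut: "u \<le> t" "t \<le> v" using assms y0 unfolding u_def v_def t_def by auto
  have l0: "0 \<le> lam" "lam \<le> 1" using uv ut unfolding lam_def by (auto simp: divide_simps)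
  have tlam: "t = (1-lam)*u + lam * v"
  proof -
    have "lam*(v-u) = t-u" using uv unfolding lam_def by simp
    then show ?thesis by (simp add: algebra_simps)
  qed
  have yG: "y = a powr (1-lam) * \<theta> powr lam"
  proof -
    have "a powr (1-lam) * \<theta> powr lam = exp ((1-lam)*u + lam * v)"
      using assms unfolding u_def v_def by (simp add: powr_def exp_add mult.commute)
    also have "\<dots> = y" using tlam y0 t_def by (metis exp_ln)
    finally show ?thesis by simp
  qed
  define G where "G = a powr (1-lam) * (\<theta>/a) powr lam"
  have G0: "G > 0" using assms unfolding G_def by simp
  have h1: "\<alpha>/G \<le> (1-lam)*(\<alpha>/a) + lam*(\<alpha>/(\<theta>/a))"
  proof -
    have "\<alpha>/G = (\<alpha>/a) powr (1-lam) * (\<alpha>/(\<theta>/a)) powr lam"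
    proof -
      have e: "\<alpha> = \<alpha> powr (1-lam) * \<alpha> powr lam" using assms by (simp flip: powr_add)
      have "(\<alpha>/a) powr (1-lam) * (\<alpha>/(\<theta>/a)) powr lam = (\<alpha> powr (1-lam) * \<alpha> powr lam) / G"
        using assms unfolding G_def by (simp add: powr_divide powr_mult)
      then show ?thesis using e by simp
    qed
    also have "\<dots> \<le> (1-lam)*(\<alpha>/a) + lam*(\<alpha>/(\<theta>/a))"
      using l0 assms by (intro Youngs_inequality_0) auto
    finally show ?thesis .
  qed
  have h2: "\<beta>*y/G \<le> (1-lam)*(\<beta>*a/a) + lam*(\<beta>*\<theta>/(\<theta>/a))"
  proof -
    have "\<beta>*y/G = (\<beta>*a/a) powr (1-lam) * (\<beta>*\<theta>/(\<theta>/a)) powr lam"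
    proof -
      have "\<beta> = \<beta> powr (1-lam) * \<beta> powr lam" using assms by (simp flip: powr_add)
      then have "\<beta>*y = (\<beta>*a) powr (1-lam) * (\<beta>*\<theta>) powr lam"
        using assms yG by (simp add: powr_mult)
      moreover have "(\<beta>*a/a) powr (1-lam) * (\<beta>*\<theta>/(\<theta>/a)) powr lam = ((\<beta>*a) powr (1-lam) * (\<beta>*\<theta>) powr lam) / G"
      proof -
        have "(\<beta>*a/a) powr (1-lam) = (\<beta>*a) powr (1-lam) / a powr (1-lam)"
          using assms by (simp add: powr_mult powr_divide)
        moreover have "(\<beta>*\<theta>/(\<theta>/a)) powr lam = (\<beta>*\<theta>) powr lam / (\<theta>/a) powr lam"
          using assms by (simp add: powr_mult powr_divide)
        ultimately show ?thesis unfolding G_def by simp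
      qed
      ultimately show ?thesis by (metis ln_le_cancel_iff)
    qed
    also have "\<dots> \<le> (1-lam)*(\<beta>*a/a) + lam*(\<beta>*\<theta>/(\<theta>/a))"
      using l0 assms by (intro Youngs_inequality_0) auto
    finally show ?thesis .
  qed
  have "(\<alpha>+\<beta>*y)/G \<le> (1-lam)*((\<alpha>+\<beta>*a)/a) + lam*((\<alpha>+\<beta>*\<theta>)/(\<theta>/a))"
    using h1 h2 by (simp add: add_divide_distrib field_simps)
  also have "\<dots> = 1" using assms by simp
  finally have "\<alpha>+\<beta>*y \<le> G" using G0 by simp
  then have "(\<alpha>+\<beta>*y) powr (1+s) \<le> G powr (1+s)"
    using assms y0 by (intro powr_mono2) auto
  also have "\<dots> \<le> a * y powr s"
  proof -
    have lnG: "ln G = (1-lam)*u + lam*(v-u)" using assms unfolding G_def u_def v_def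
      by (simp add: ln_mult ln_powr ln_div)
    have "ln (G powr (1+s)) = (1+s)*((1-lam)*u + lam*(v-u))" using G0 lnG by (simp add: ln_powr)
    also have "\<dots> \<le> u + s*t"
    proof -
      have "lam*(v - (2+s)*u) \<le> 0" using l0 assms unfolding u_def v_def
        by (intro mult_nonneg_nonpos) auto
      then show ?thesis unfolding tlam by (simp add: algebra_simps)
    qed
    also have "\<dots> = ln (a * y powr s)" using assms y0 unfolding u_def t_def by (simp add: ln_mult ln_powr)
    finally have "ln (G powr (1+s)) \<le> ln (a * y powr s)" .
    moreover have "0 < G powr (1+s)" "0 < a * y powr s" using G0 assms y0 by auto
    ultimately show ?thesis by (metis ln_le_cancel_iff)
  qed
  finally show ?thesis .
qed

lemma pw:
  fixes \<theta> r p y pay :: real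
  assumes th: "\<theta> > 1" and r1: "1/\<theta> < r" and r2: "r \<le> \<theta> powr (-1/2)"
    and p: "1 \<le> p" "p \<le> \<theta>" and y: "1 \<le> y" "y \<le> \<theta>"
    and pay1: "1 \<le> pay" and payT: "Phi1 \<theta> r y \<le> p \<Longrightarrow> Phi1 \<theta> r y \<le> pay"
  shows "p * Eff p y powr (max 1 (ln \<theta> / ln (r*\<theta>) - 2)) \<le> r*\<theta>*pay"
proof -
  define S where "S = max 1 (ln \<theta> / ln (r*\<theta>) - 2)"
  define a where "a = r*\<theta>"
  have a1: "a > 1" using r1 th unfolding a_def by (simp add: field_simps)
  have r0: "r > 0" using r1 th by (smt (verit) divide_pos_pos)
  have "r^2 \<le> (\<theta> powr (-1/2))^2" using r0 r2 by (intro power_mono) auto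
  also have "(\<theta> powr (-1/2))^2 = \<theta> powr (-1)"
    by (simp add: power2_eq_square flip: powr_add)
  also have "\<dots> = 1/\<theta>" using th by (simp add: powr_minus_divide)
  finally have rr: "r^2 * \<theta> \<le> 1" using th by (simp add: field_simps)
  have rlt1: "r < 1"
  proof (rule ccontr)
    assume "\<not> r < 1"
    then have "r^2 \<ge> 1" by (simp add: one_le_power)
    then show False using rr th by (smt (verit) mult_le_cancel_left1 mult.commute)
  qed
  have aa: "a \<le> \<theta>" using rlt1 r0 th unfolding a_def by simp
  have alt: "a < \<theta>" using rlt1 r0 th unfolding a_def by simp
  define \<alpha> where "\<alpha> = (a-1)/(1-r)"
  define \<beta> where "\<beta> = (1 - r^2*\<theta>)/((1-r)*a)"
  have phi: "phi_r \<theta> r z = \<alpha> + \<beta>*z" for z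
    unfolding phi_r_def \<alpha>_def \<beta>_def a_def by (simp add: field_simps)
  have al0: "\<alpha> > 0" using a1 rlt1 unfolding \<alpha>_def by simp
  have be0: "\<beta> \<ge> 0" using a1 rlt1 rr unfolding \<beta>_def by (simp add: field_simps)
  have ra: "r^2*\<theta> = r*a" unfolding a_def by (simp add: power2_eq_square)
  have ba: "\<beta>*a = (1 - r*a)/(1-r)" unfolding \<beta>_def ra using a1 by simp
  have e1: "\<alpha> + \<beta>*a = a"
  proof -
    have "\<alpha> + \<beta>*a = (a-1 + (1 - r*a))/(1-r)" unfolding ba \<alpha>_def by (simp add: add_divide_distrib[symmetric])
    also have "\<dots> = a*(1-r)/(1-r)" by (simp add: algebra_simps)
    also have "\<dots> = a" using rlt1 by simp
    finally show ?thesis .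
  qed
  have e2: "\<alpha> + \<beta>*\<theta> = \<theta>/a"
  proof -
    have k: "(1-r)*a \<noteq> 0" using rlt1 a1 by simp
    have A: "\<alpha>*((1-r)*a) = (a-1)*a" unfolding \<alpha>_def using rlt1 by simp
    have B: "\<beta>*\<theta>*((1-r)*a) = (1 - r*a)*\<theta>" unfolding \<beta>_def ra using k by simp
    have C: "r*a*\<theta> = a*a" unfolding a_def by simp
    have "(\<alpha> + \<beta>*\<theta>)*((1-r)*a) = \<alpha>*((1-r)*a) + \<beta>*\<theta>*((1-r)*a)" by (simp add: distrib_right)
    also have "\<dots> = (a-1)*a + (1-r*a)*\<theta>" using A B by (simp only:)
    also have "\<dots> = a*a - a + \<theta> - r*a*\<theta>" by (simp add: algebra_simps)
    also have "\<dots> = \<theta> - a" using C by linarith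
    finally have "(\<alpha> + \<beta>*\<theta>)*((1-r)*a) = \<theta> - a" .
    moreover have "(\<theta>/a)*((1-r)*a) = \<theta> - a" using a1 r0 unfolding a_def by (simp add: algebra_simps)
    ultimately show ?thesis using k by (metis mult_right_cancel)
  qed
  define E where "E = Eff p y"
  have E0a: "E > 0" using p y unfolding E_def Eff_def by auto
  have E0b: "E \<le> 1"
  proof (cases "p \<le> y")
    case True then show ?thesis using p unfolding E_def Eff_def by (simp add: min_le_iff_disj)
  next
    case False then show ?thesis using y unfolding E_def Eff_def by (simp add: min_le_iff_disj)
  qed
  note E0 = E0a E0b
  have Ep: "E \<le> p/y" "E \<le> y/p" unfolding E_def Eff_def by auto
  have S1: "S \<ge> 1" unfolding S_def by simp
  have ES: "E powr S \<le> E" using powr_mono'[of 1 S E] E0 S1 by simp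
  have pE: "p*E \<le> y" using Ep(2) p by (simp add: field_simps)
  have ESle1: "E powr S \<le> 1" using ES E0 by linarith
  have "p * E powr S \<le> a * pay"
  proof (cases "Phi1 \<theta> r y \<le> p")
    case True
    then have T: "Phi1 \<theta> r y \<le> pay" by (rule payT)
    have "a * (\<alpha> + \<beta>*y) - y = a*\<alpha> + (\<beta>*a)*y - y" by (simp add: algebra_simps)
    also have "\<dots> = a*((a-1)/(1-r)) + ((1 - r*a)/(1-r))*y - y" unfolding ba \<alpha>_def by simp
    also have "\<dots> = (a-1)*(a - r*y)/(1-r)"
    proof -
      obtain d where d: "d = 1 - r" "d \<noteq> 0" using rlt1 by auto
      then have rd: "r = 1 - d" by simp
      show ?thesis unfolding d(1)[symmetric] unfolding rd using d(2)
        by (simp add: field_simps)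
    qed
    finally have "a * (\<alpha> + \<beta>*y) - y = (a-1)*(a - r*y)/(1-r)" .
    moreover have "(a-1)*(a - r*y)/(1-r) \<ge> 0" using a1 rlt1 y r0 unfolding a_def by simp
    ultimately have "y \<le> a * (\<alpha> + \<beta>*y)" by linarith
    also have "\<dots> \<le> a * Phi1 \<theta> r y" using a1 unfolding Phi1_def phi by simp
    also have "\<dots> \<le> a * pay" using a1 T by simp
    finally have "y \<le> a*pay" .
    moreover have "p * E powr S \<le> p * E" using ES p by simp
    ultimately show ?thesis using pE by linarith
  next
    case False
    show ?thesis
    proof (cases "p \<le> a")
      case True
      have "p * E powr S \<le> p" using ESle1 p by (simp add: mult_left_le)
      also have "\<dots> \<le> a * pay" using True pay1 a1 by (smt (verit) mult_le_cancel_left1)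
      finally show ?thesis .
    next
      case pa: False
      have phy: "p < \<alpha> + \<beta>*y" using False pa unfolding Phi1_def phi a_def by auto
      have "\<beta>*(y-a) > 0" using phy pa e1 by (simp add: algebra_simps)
      then have ya: "y > a" "\<beta> > 0" using be0 by (auto simp: zero_less_mult_iff)
      have lnS: "ln \<theta> \<le> (2+S) * ln a"
      proof -
        have "ln a > 0" using a1 by simp
        moreover have "ln \<theta> / ln a - 2 \<le> S" unfolding S_def a_def by simp
        ultimately show ?thesis by (simp add: field_simps)
      qed
      have key': "(\<alpha>+\<beta>*y) powr (1+S) \<le> a * y powr S"
        using key[OF al0 ya(2) e1 e2 a1 alt less_imp_le[OF ya(1)] y(2) lnS] S1 by simp
      have "p * E powr S \<le> p * (p/y) powr S"
        using E0 Ep S1 p by (intro mult_left_mono powr_mono2) auto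
      also have "\<dots> = p powr (1+S) / y powr S"
        using p y by (simp add: powr_add powr_divide)
      also have "\<dots> \<le> (\<alpha>+\<beta>*y) powr (1+S) / y powr S"
        using p y phy S1 by (intro divide_right_mono powr_mono2) auto
      also have "\<dots> \<le> a" using key' y by (simp add: divide_le_eq)
      also have "\<dots> \<le> a * pay" using pay1 a1 by simp
      finally show ?thesis .
    qed
  qed
  then show ?thesis unfolding S_def E_def a_def .
qed

lemma meas_find:
  fixes P :: "nat \<Rightarrow> 'a \<Rightarrow> real"
  assumes "\<And>i. i \<in> set is \<Longrightarrow> P i \<in> borel_measurable M" "T \<in> borel_measurable M"
  shows "(\<lambda>\<omega>. case find (\<lambda>p. T \<omega> \<le> p) (map (\<lambda>i. P i \<omega>) is) of None \<Rightarrow> 1 | Some p \<Rightarrow> p) \<in> borel_measurable M"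
  using assms(1)
proof (induction "is")
  case Nil
  then show ?case by simp
next
  case (Cons i "is")
  have [measurable]: "P i \<in> borel_measurable M" using Cons.prems by simp
  have [measurable]: "T \<in> borel_measurable M" using assms(2) .
  have [measurable]: "(\<lambda>\<omega>. case find (\<lambda>p. T \<omega> \<le> p) (map (\<lambda>i. P i \<omega>) is) of None \<Rightarrow> 1 | Some p \<Rightarrow> p) \<in> borel_measurable M"
    using Cons by simp
  have eq: "(\<lambda>\<omega>. case find (\<lambda>p. T \<omega> \<le> p) (map (\<lambda>i. P i \<omega>) (i # is)) of None \<Rightarrow> 1 | Some p \<Rightarrow> p)
    = (\<lambda>\<omega>. if T \<omega> \<le> P i \<omega> then P i \<omega> else (case find (\<lambda>p. T \<omega> \<le> p) (map (\<lambda>i. P i \<omega>) is) of None \<Rightarrow> 1 | Some p \<Rightarrow> p))"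
    by (auto simp: fun_eq_iff)
  show ?case unfolding eq by measurable
qed

lemma find_bounds:
  assumes "find Q xs = Some q" shows "q \<in> set xs" "Q q"
  using assms by (auto simp: find_Some_iff)

theorem corollary1:
  fixes M :: "'a measure" and \<theta> r p_star :: real and n :: nat
    and P :: "nat \<Rightarrow> 'a \<Rightarrow> real" and Y :: "'a \<Rightarrow> real"
  assumes "prob_space M"
    and "\<theta> > 1"
    and "1/\<theta> < r" and "r \<le> \<theta> powr (-1/2)"
    and "n \<ge> 1"
    and "\<And>i. i < n \<Longrightarrow> P i \<in> borel_measurable M"
    and "\<And>i \<omega>. i < n \<Longrightarrow> \<omega> \<in> space M \<Longrightarrow> P i \<omega> \<in> {1..\<theta>}"
    and "Y \<in> borel_measurable M"
    and "\<And>\<omega>. \<omega> \<in> space M \<Longrightarrow> Y \<omega> \<in> {1..\<theta>}"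
    and "p_star \<in> {1..\<theta>}"
    and "AE \<omega> in M. (MAX i\<in>{..<n}. P i \<omega>) = p_star"
  shows "(\<integral>\<omega>. A1 \<theta> r (Y \<omega>) (map (\<lambda>i. P i \<omega>) [0..<n]) \<partial>M)
           / (\<integral>\<omega>. (MAX i\<in>{..<n}. P i \<omega>) \<partial>M)
         \<ge> 1/(r*\<theta>) * (\<integral>\<omega>. Eff p_star (Y \<omega>) powr (max 1 (ln \<theta> / ln (r*\<theta>) - 2)) \<partial>M)"
proof -
  interpret prob_space M by fact
  define S where "S = max 1 (ln \<theta> / ln (r*\<theta>) - 2)"
  define A where "A \<omega> = A1 \<theta> r (Y \<omega>) (map (\<lambda>i. P i \<omega>) [0..<n])" for \<omega>
  define F where "F \<omega> = Eff p_star (Y \<omega>) powr S" for \<omega>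
  define X where "X \<omega> = (MAX i\<in>{..<n}. P i \<omega>)" for \<omega>
  have rt: "r*\<theta> > 0" using assms(2,3) by (simp add: field_simps)
  have ps: "p_star \<ge> 1" "p_star \<le> \<theta>" using assms(10) by auto
  have Ym[measurable]: "Y \<in> borel_measurable M" by fact
  have Xm: "X \<in> borel_measurable M" unfolding X_def
    using assms(6) by (intro borel_measurable_Max) auto
  have intX: "integral\<^sup>L M X = p_star"
  proof -
    have "integral\<^sup>L M X = integral\<^sup>L M (\<lambda>_. p_star)"
      using Xm assms(11) unfolding X_def by (intro integral_cong_AE) auto
    then show ?thesis by (simp add: prob_space)
  qed
  have Tm: "(\<lambda>\<omega>. Phi1 \<theta> r (Y \<omega>)) \<in> borel_measurable M"
    unfolding Phi1_def phi_r_def by measurable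
  have Am: "A \<in> borel_measurable M"
    unfolding A_def A1_def using meas_find[OF _ Tm, of "[0..<n]" P] assms(6) by auto
  have Fm: "F \<in> borel_measurable M"
    unfolding F_def Eff_def by measurable
  have Abnd: "A \<omega> \<in> {1..\<theta>}" if "\<omega> \<in> space M" for \<omega>
  proof (cases "find (\<lambda>p. Phi1 \<theta> r (Y \<omega>) \<le> p) (map (\<lambda>i. P i \<omega>) [0..<n])")
    case None
    then show ?thesis unfolding A_def A1_def using assms(2) by simp
  next
    case (Some q)
    then have "q \<in> set (map (\<lambda>i. P i \<omega>) [0..<n])" by (rule find_bounds)
    then show ?thesis unfolding A_def A1_def using Some assms(7) that by auto
  qed
  have Fbnd: "F \<omega> \<in> {0..1}" if "\<omega> \<in> space M" for \<omega>
  proof -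
    have y: "Y \<omega> \<ge> 1" using assms(9) that by auto
    have E0: "0 \<le> Eff p_star (Y \<omega>)" using ps y unfolding Eff_def by auto
    have E1: "Eff p_star (Y \<omega>) \<le> 1"
    proof (cases "p_star \<le> Y \<omega>")
      case True then show ?thesis using ps unfolding Eff_def by (simp add: min_le_iff_disj)
    next
      case False then show ?thesis using y unfolding Eff_def by (simp add: min_le_iff_disj)
    qed
    have S0: "S \<ge> 0" unfolding S_def by simp
    have "F \<omega> \<le> Eff p_star (Y \<omega>) powr 0" unfolding F_def using E0 E1 S0 by (intro powr_mono') auto
    also have "\<dots> \<le> 1" by simp
    finally have "F \<omega> \<le> 1" .
    then show ?thesis unfolding F_def by simp
  qed
  have intA: "integrable M A"
  proof (rule integrable_const_bound[where B=\<theta>])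
    show "AE x in M. norm (A x) \<le> \<theta>" using Abnd by (intro AE_I2) fastforce
  qed (rule Am)
  have intF: "integrable M F"
  proof (rule integrable_const_bound[where B=1])
    show "AE x in M. norm (F x) \<le> 1" using Fbnd by (intro AE_I2) fastforce
  qed (rule Fm)
  have pt: "AE \<omega> in M. p_star / (r*\<theta>) * F \<omega> \<le> A \<omega>"
    using assms(11)
  proof (rule AE_mp, intro AE_I2 impI)
    fix \<omega> assume om: "\<omega> \<in> space M" and mx: "(MAX i\<in>{..<n}. P i \<omega>) = p_star"
    have ne: "{..<n} \<noteq> {}" using assms(5) lessThan_empty_iff by (metis not_one_le_zero)
    have "p_star \<in> (\<lambda>i. P i \<omega>) ` {..<n}" using Max_in[of "(\<lambda>i. P i \<omega>) ` {..<n}"] ne mx by simp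
    then obtain j where j: "j < n" "P j \<omega> = p_star" by auto
    have y: "1 \<le> Y \<omega>" "Y \<omega> \<le> \<theta>" using assms(9) om by auto
    have pay1: "1 \<le> A \<omega>" using Abnd om by auto
    have payT: "Phi1 \<theta> r (Y \<omega>) \<le> A \<omega>" if T: "Phi1 \<theta> r (Y \<omega>) \<le> p_star"
    proof (cases "find (\<lambda>p. Phi1 \<theta> r (Y \<omega>) \<le> p) (map (\<lambda>i. P i \<omega>) [0..<n])")
      case None
      then have "\<not> Phi1 \<theta> r (Y \<omega>) \<le> P j \<omega>" using j(1) by (auto simp: find_None_iff)
      then show ?thesis using T j by simp
    next
      case (Some q)
      then show ?thesis unfolding A_def A1_def using find_bounds(2)[OF Some] by simp
    qed
    have "p_star * F \<omega> \<le> r*\<theta>*A \<omega>"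
      unfolding F_def S_def using pw[OF assms(2,3,4) ps y pay1 payT] by simp
    then show "p_star / (r*\<theta>) * F \<omega> \<le> A \<omega>" using rt by (simp add: field_simps)
  qed
  have "integral\<^sup>L M (\<lambda>\<omega>. p_star / (r*\<theta>) * F \<omega>) \<le> integral\<^sup>L M A"
    using intA intF pt by (intro integral_mono_AE) auto
  then have "p_star / (r*\<theta>) * integral\<^sup>L M F \<le> integral\<^sup>L M A" by simp
  then have "1/(r*\<theta>) * integral\<^sup>L M F \<le> integral\<^sup>L M A / p_star"
    using ps by (simp add: field_simps)
  then show ?thesis unfolding A_def F_def S_def X_def[symmetric] intX .
qed

end
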